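(* Let $\Lambda\subset\mathbb{Z}^n$ be an antichain lattice. Then $\Lambda$ is generic in the sense that it has a minimal Markov basis all of whose elements are fully supported if and only if $\Lambda$, as a subset of $\mathbb{Z}^n$, is generic in the sense that for every $\eta\in\mathbb{Z}^n$ with $T^o_\eta\cap\Lambda=\emptyset$, each face of $T_\eta$ contains at most one element of $\Lambda$.
   Context: An antichain lattice is a subgroup of $\mathbb{Z}^n$ whose distinct elements are pairwise incomparable in the componentwise order. $\alpha\in\mathbb{Z}^n$ is fully supported if $\alpha_i\ne0$ for all $i$. For $u\in\mathbb{N}^n$, the fiber $\mathcal{F}(u)=(u+\Lambda)\cap\mathbb{N}^n$. For a finite $\mathcal{B}\subseteq\Lambda$, $\mathcal{F}(u)_{\mathcal{B}}$ is the graph on $\mathcal{F}(u)$ with an edge $v$–$w$ iff $v-w\in\mathcal{B}$ or $w-v\in\mathcal{B}$. A Markov basis of $\Lambda$ is a finite $\mathcal{B}\subseteq\Lambda$ such that $\mathcal{F}(u)_{\mathcal{B}}$ is connected for every $u\in\mathbb{N}^n$; it is minimal if minimal under inclusion. $T_\eta=\eta-\mathbb{N}^n$, $T^o_\eta=\{\beta:\beta_i<\eta_i\ \forall i\}$; for nonempty $X\subseteq[n]$ the $X$-face of $T_\eta$ is $\{\alpha\in T_\eta:\alpha_i=\eta_i\ \forall i\in X\}$. *)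

theory Defs
  imports Main "HOL-Library.Function_Algebras"
begin

text \<open>Vectors in Z^n are functions from a finite index type 'n to int;
  the order on functions is the componentwise order.\<close>

definition is_lattice :: "('n::finite \<Rightarrow> int) set \<Rightarrow> bool" where
  "is_lattice L \<longleftrightarrow> 0 \<in> L \<and> (\<forall>a\<in>L. \<forall>b\<in>L. a + b \<in> L) \<and> (\<forall>a\<in>L. - a \<in> L)"

definition antichain_lattice :: "('n::finite \<Rightarrow> int) set \<Rightarrow> bool" where
  "antichain_lattice L \<longleftrightarrow> is_lattice L \<and>
     (\<forall>a\<in>L. \<forall>b\<in>L. a \<noteq> b \<longrightarrow> \<not> a \<le> b \<and> \<not> b \<le> a)"

definition fully_supported :: "('n::finite \<Rightarrow> int) \<Rightarrow> bool" where
  "fully_supported a \<longleftrightarrow> (\<forall>i. a i \<noteq> 0)"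

definition nonneg :: "('n::finite \<Rightarrow> int) \<Rightarrow> bool" where
  "nonneg u \<longleftrightarrow> (\<forall>i. 0 \<le> u i)"

definition fiber :: "('n::finite \<Rightarrow> int) set \<Rightarrow> ('n \<Rightarrow> int) \<Rightarrow> ('n \<Rightarrow> int) set" where
  "fiber L u = {v. v - u \<in> L \<and> nonneg v}"

definition fiber_edge :: "('n::finite \<Rightarrow> int) set \<Rightarrow> ('n \<Rightarrow> int) set \<Rightarrow> ('n \<Rightarrow> int)
    \<Rightarrow> ('n \<Rightarrow> int) \<Rightarrow> ('n \<Rightarrow> int) \<Rightarrow> bool" where
  "fiber_edge L B u v w \<longleftrightarrow> v \<in> fiber L u \<and> w \<in> fiber L u \<and> (v - w \<in> B \<or> w - v \<in> B)"

definition fiber_graph_connected :: "('n::finite \<Rightarrow> int) set \<Rightarrow> ('n \<Rightarrow> int) set \<Rightarrow> ('n \<Rightarrow> int) \<Rightarrow> bool" where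
  "fiber_graph_connected L B u \<longleftrightarrow>
     (\<forall>v\<in>fiber L u. \<forall>w\<in>fiber L u. (fiber_edge L B u)\<^sup>*\<^sup>* v w)"

definition markov_basis :: "('n::finite \<Rightarrow> int) set \<Rightarrow> ('n \<Rightarrow> int) set \<Rightarrow> bool" where
  "markov_basis L B \<longleftrightarrow> finite B \<and> B \<subseteq> L \<and> (\<forall>u. nonneg u \<longrightarrow> fiber_graph_connected L B u)"

definition minimal_markov_basis :: "('n::finite \<Rightarrow> int) set \<Rightarrow> ('n \<Rightarrow> int) set \<Rightarrow> bool" where
  "minimal_markov_basis L B \<longleftrightarrow> markov_basis L B \<and> (\<forall>C. C \<subset> B \<longrightarrow> \<not> markov_basis L C)"

definition T_cone :: "('n::finite \<Rightarrow> int) \<Rightarrow> ('n \<Rightarrow> int) set" where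
  "T_cone eta = {a. a \<le> eta}"

definition T_open :: "('n::finite \<Rightarrow> int) \<Rightarrow> ('n \<Rightarrow> int) set" where
  "T_open eta = {b. \<forall>i. b i < eta i}"

definition T_face :: "('n::finite \<Rightarrow> int) \<Rightarrow> 'n set \<Rightarrow> ('n \<Rightarrow> int) set" where
  "T_face eta X = {a \<in> T_cone eta. \<forall>i\<in>X. a i = eta i}"

definition generic_markov :: "('n::finite \<Rightarrow> int) set \<Rightarrow> bool" where
  "generic_markov L \<longleftrightarrow> (\<exists>B. minimal_markov_basis L B \<and> (\<forall>b\<in>B. fully_supported b))"

definition generic_faces :: "('n::finite \<Rightarrow> int) set \<Rightarrow> bool" where
  "generic_faces L \<longleftrightarrow> (\<forall>eta. T_open eta \<inter> L = {} \<longrightarrow>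
     (\<forall>X. X \<noteq> {} \<longrightarrow> (\<forall>a\<in>T_face eta X \<inter> L. \<forall>b\<in>T_face eta X \<inter> L. a = b)))"

end

theory Submission
  imports Defs Complex_Main
begin


lemma lat_add: "is_lattice L \<Longrightarrow> a \<in> L \<Longrightarrow> b \<in> L \<Longrightarrow> a + b \<in> L"
  by (simp add: is_lattice_def)
lemma lat_neg: "is_lattice L \<Longrightarrow> a \<in> L \<Longrightarrow> - a \<in> L"
  by (simp add: is_lattice_def)
lemma lat_diff: "is_lattice L \<Longrightarrow> a \<in> L \<Longrightarrow> b \<in> L \<Longrightarrow> a - b \<in> L"
  by (metis diff_conv_add_uminus lat_add lat_neg)
lemma lat_zero: "is_lattice L \<Longrightarrow> 0 \<in> L"
  by (simp add: is_lattice_def)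

lemma nat_subseq_mono:
  fixes g :: "nat \<Rightarrow> nat"
  shows "\<exists>r::nat\<Rightarrow>nat. strict_mono r \<and> (\<forall>i j. i \<le> j \<longrightarrow> g (r i) \<le> g (r j))"
proof -
  obtain f where f: "strict_mono f" "monoseq (\<lambda>n. g (f n))" using seq_monosub by blast
  show ?thesis
  proof (cases "incseq (\<lambda>n. g (f n))")
    case True
    then have "\<forall>i j. i \<le> j \<longrightarrow> g (f i) \<le> g (f j)" by (auto simp: incseq_def)
    then show ?thesis using f(1) by (intro exI[of _ f] conjI)
  next
    case False
    then have dec: "decseq (\<lambda>n. g (f n))" using f(2) by (auto simp: monoseq_iff)
    obtain N where N: "\<forall>n. g (f N) \<le> g (f n)"
      using ex_has_least_nat[of "\<lambda>_. True" 0 "\<lambda>n. g (f n)"] by blast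
    have eq: "g (f n) = g (f N)" if "N \<le> n" for n
    proof -
      have "g (f n) \<le> g (f N)" using dec that by (simp add: decseq_def)
      moreover have "g (f N) \<le> g (f n)" using N by blast
      ultimately show ?thesis by (rule le_antisym)
    qed
    define r where "r = (\<lambda>n. f (n + N))"
    have "strict_mono r"
    proof (rule strict_monoI)
      fix x y :: nat
      assume "x < y"
      then have "x + N < y + N" by simp
      then show "r x < r y" using strict_monoD[OF f(1)] by (simp add: r_def)
    qed
    moreover have "\<forall>i j. i \<le> j \<longrightarrow> g (r i) \<le> g (r j)"
    proof (intro allI impI)
      fix i j :: nat
      have "g (f (i + N)) = g (f N)" "g (f (j + N)) = g (f N)" using eq[of "i + N"] eq[of "j + N"] by simp_all
      then show "g (r i) \<le> g (r j)" by (simp add: r_def)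
    qed
    ultimately show ?thesis by (intro exI[of _ r] conjI)
  qed
qed

lemma dickson_set:
  fixes f :: "nat \<Rightarrow> 'n \<Rightarrow> nat"
  assumes "finite I"
  shows "\<exists>r::nat\<Rightarrow>nat. strict_mono r \<and> (\<forall>i j k. i \<le> j \<longrightarrow> k \<in> I \<longrightarrow> f (r i) k \<le> f (r j) k)"
  using assms
proof (induction I rule: finite_induct)
  case empty
  show ?case
  proof (intro exI conjI)
    show "strict_mono (\<lambda>n::nat. n)" by (simp add: strict_mono_def)
    show "\<forall>i j k. i \<le> j \<longrightarrow> k \<in> {} \<longrightarrow> f i k \<le> f j k" by simp
  qed
next
  case (insert a I)
  from insert.IH obtain r :: "nat \<Rightarrow> nat" where r: "strict_mono r" "\<forall>i j k. i \<le> j \<longrightarrow> k \<in> I \<longrightarrow> f (r i) k \<le> f (r j) k"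
    by (elim exE conjE)
  from nat_subseq_mono[of "\<lambda>n. f (r n) a"]
  obtain s :: "nat \<Rightarrow> nat" where s: "strict_mono s" "\<forall>i j. i \<le> j \<longrightarrow> f (r (s i)) a \<le> f (r (s j)) a"
    by (elim exE conjE)
  have "strict_mono (r \<circ> s)" by (rule strict_mono_o[OF r(1) s(1)])
  moreover have "\<forall>(i::nat) j k. i \<le> j \<longrightarrow> k \<in> insert a I \<longrightarrow> f ((r \<circ> s) i) k \<le> f ((r \<circ> s) j) k"
  proof (intro allI impI)
    fix i j :: nat and k
    assume ij: "i \<le> j" and k: "k \<in> insert a I"
    have sij: "s i \<le> s j" using ij strict_mono_less_eq[OF s(1)] by simp
    show "f ((r \<circ> s) i) k \<le> f ((r \<circ> s) j) k"
    proof (cases "k = a")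
      case True
      then show ?thesis using s(2) ij by simp
    next
      case False
      then have "k \<in> I" using k by simp
      then show ?thesis using r(2) sij by simp
    qed
  qed
  ultimately show ?case by (intro exI[of _ "r \<circ> s"] conjI)
qed

lemma dickson_int:
  fixes f :: "nat \<Rightarrow> 'n::finite \<Rightarrow> int"
  assumes "\<And>n. nonneg (f n)"
  shows "\<exists>r::nat\<Rightarrow>nat. strict_mono r \<and> (\<forall>i j. i \<le> j \<longrightarrow> f (r i) \<le> f (r j))"
proof -
  obtain r :: "nat \<Rightarrow> nat" where r: "strict_mono r" "\<forall>i j k. i \<le> j \<longrightarrow> k \<in> UNIV \<longrightarrow> nat (f (r i) k) \<le> nat (f (r j) k)"
    using dickson_set[OF finite_UNIV, of "\<lambda>n k. nat (f n k)"] by blast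
  have "f (r i) \<le> f (r j)" if "i \<le> j" for i j
    unfolding le_fun_def
  proof
    fix k
    have "nat (f (r i) k) \<le> nat (f (r j) k)" using r(2) that by blast
    moreover have "0 \<le> f (r i) k" "0 \<le> f (r j) k" using assms[of "r i"] assms[of "r j"]
      by (auto simp add: nonneg_def)
    ultimately show "f (r i) k \<le> f (r j) k" using nat_le_eq_zle by auto
  qed
  then show ?thesis using r(1) by (intro exI[of _ r]) simp
qed

lemma antichain_finite:
  fixes S :: "('n::finite \<Rightarrow> int) set"
  assumes "\<And>x. x \<in> S \<Longrightarrow> nonneg x"
    and "\<And>x y. x \<in> S \<Longrightarrow> y \<in> S \<Longrightarrow> x \<le> y \<Longrightarrow> x = y"
  shows "finite S"
proof (rule ccontr)
  assume "infinite S"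
  then obtain f :: "nat \<Rightarrow> ('n \<Rightarrow> int)" where f: "inj f" "range f \<subseteq> S"
    using infinite_countable_subset by blast
  obtain r :: "nat \<Rightarrow> nat" where r: "strict_mono r" "\<forall>i j. i \<le> j \<longrightarrow> f (r i) \<le> f (r j)"
    using dickson_int[of f] f assms(1) by blast
  have "f (r 0) \<le> f (r 1)" using r(2) by simp
  moreover have "f (r 0) \<in> S" "f (r 1) \<in> S" using f(2) by auto
  ultimately have "f (r 0) = f (r 1)" using assms(2) by blast
  then have "r 0 = r 1" using f(1) by (simp add: inj_eq)
  then have "(0::nat) = 1" using strict_mono_eq[OF r(1)] by blast
  then show False by simp
qed

lemma antichain_pairs_finite:
  fixes S :: "(('n::finite \<Rightarrow> int) \<times> ('n \<Rightarrow> int)) set"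
  assumes "\<And>x y. (x,y) \<in> S \<Longrightarrow> nonneg x \<and> nonneg y"
    and "\<And>x y x' y'. (x,y) \<in> S \<Longrightarrow> (x',y') \<in> S \<Longrightarrow> x \<le> x' \<Longrightarrow> y \<le> y' \<Longrightarrow> x = x' \<and> y = y'"
  shows "finite S"
proof (rule ccontr)
  assume "infinite S"
  then obtain f :: "nat \<Rightarrow> ('n \<Rightarrow> int) \<times> ('n \<Rightarrow> int)" where f: "inj f" "range f \<subseteq> S"
    using infinite_countable_subset by blast
  have nn: "nonneg (fst (f n)) \<and> nonneg (snd (f n))" for n
  proof -
    have "f n \<in> S" using f(2) by auto
    then show ?thesis using assms(1)[of "fst (f n)" "snd (f n)"] by simp
  qed
  obtain r :: "nat \<Rightarrow> nat" where r: "strict_mono r" "\<forall>i j. i \<le> j \<longrightarrow> fst (f (r i)) \<le> fst (f (r j))"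
    using dickson_int[of "\<lambda>n. fst (f n)"] nn by blast
  obtain s :: "nat \<Rightarrow> nat" where s: "strict_mono s" "\<forall>i j. i \<le> j \<longrightarrow> snd (f (r (s i))) \<le> snd (f (r (s j)))"
    using dickson_int[of "\<lambda>n. snd (f (r n))"] nn by blast
  have le: "s 0 \<le> s 1" using s(1) by (simp add: strict_mono_less_eq)
  have le2: "r (s 0) \<le> r (s 1)" using r(1) le by (simp add: strict_mono_less_eq)
  have i0: "(fst (f (r (s 0))), snd (f (r (s 0)))) \<in> S" using f(2) by auto
  have i1: "(fst (f (r (s 1))), snd (f (r (s 1)))) \<in> S" using f(2) by auto
  have "fst (f (r (s 0))) \<le> fst (f (r (s 1)))" using r(2) le by blast
  moreover have "snd (f (r (s 0))) \<le> snd (f (r (s 1)))" using s(2) by blast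
  ultimately have "fst (f (r (s 0))) = fst (f (r (s 1))) \<and> snd (f (r (s 0))) = snd (f (r (s 1)))"
    using assms(2)[OF i0 i1] by blast
  then have "f (r (s 0)) = f (r (s 1))" by (simp add: prod_eq_iff)
  then have "r (s 0) = r (s 1)" using f(1) by (simp add: inj_eq)
  then have "s 0 = s 1" using strict_mono_eq[OF r(1)] by blast
  then have "(0::nat) = 1" using strict_mono_eq[OF s(1)] by blast
  then show False by simp
qed



definition sumv :: "('n::finite \<Rightarrow> int) \<Rightarrow> int" where
  "sumv p = (\<Sum>k\<in>UNIV. p k)"

definition mu :: "('n::finite \<Rightarrow> int) set \<Rightarrow> ('n \<Rightarrow> int) \<Rightarrow> int" where
  "mu L u = (\<Sum>p\<in>fiber L u. sumv p)"

definition minv :: "('n::finite \<Rightarrow> int) \<Rightarrow> ('n \<Rightarrow> int) \<Rightarrow> ('n \<Rightarrow> int)" where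
  "minv x y = (\<lambda>k. min (x k) (y k))"

lemma ac_lat: "antichain_lattice L \<Longrightarrow> is_lattice L"
  by (simp add: antichain_lattice_def)

lemma ac_le: "antichain_lattice L \<Longrightarrow> a \<in> L \<Longrightarrow> b \<in> L \<Longrightarrow> a \<le> b \<Longrightarrow> a = b"
  unfolding antichain_lattice_def by blast

lemma fiber_iff: "v \<in> fiber L u \<longleftrightarrow> v - u \<in> L \<and> nonneg v"
  by (simp add: fiber_def)

lemma fiber_diff: "is_lattice L \<Longrightarrow> x \<in> fiber L u \<Longrightarrow> y \<in> fiber L u \<Longrightarrow> x - y \<in> L"
proof -
  assume l: "is_lattice L" and x: "x \<in> fiber L u" and y: "y \<in> fiber L u"
  have a: "x - u \<in> L" "y - u \<in> L" using x y by (simp_all add: fiber_iff)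
  have "(x - u) - (y - u) \<in> L" by (rule lat_diff[OF l a])
  moreover have "(x - u) - (y - u) = x - y" by (simp add: algebra_simps)
  ultimately show ?thesis by simp
qed

lemma fiber_same: "is_lattice L \<Longrightarrow> v \<in> fiber L u \<Longrightarrow> fiber L v = fiber L u"
proof -
  assume l: "is_lattice L" and v: "v \<in> fiber L u"
  have vu: "v - u \<in> L" using v by (simp add: fiber_iff)
  show ?thesis
  proof (rule set_eqI)
    fix x
    have "x - v \<in> L \<longleftrightarrow> x - u \<in> L"
    proof
      assume "x - v \<in> L"
      then have "(x - v) + (v - u) \<in> L" using lat_add[OF l _ vu] by blast
      then show "x - u \<in> L" by simp
    next
      assume "x - u \<in> L"
      then have "(x - u) - (v - u) \<in> L" using lat_diff[OF l _ vu] by blast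
      then show "x - v \<in> L" by simp
    qed
    then show "x \<in> fiber L v \<longleftrightarrow> x \<in> fiber L u" by (simp add: fiber_iff)
  qed
qed

lemma self_fiber: "is_lattice L \<Longrightarrow> nonneg u \<Longrightarrow> u \<in> fiber L u"
  by (simp add: fiber_iff lat_zero)

lemma nonneg_add: "nonneg a \<Longrightarrow> nonneg b \<Longrightarrow> nonneg (a + b)"
  by (simp add: nonneg_def)

lemma fiber_shift: "is_lattice L \<Longrightarrow> nonneg m \<Longrightarrow> p \<in> fiber L u \<Longrightarrow> p + m \<in> fiber L (u + m)"
  by (simp add: fiber_iff nonneg_add)

lemma fiber_finite: "antichain_lattice L \<Longrightarrow> finite (fiber L u)"
proof -
  assume ac: "antichain_lattice L"
  show ?thesis
  proof (rule antichain_finite)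
    fix x assume "x \<in> fiber L u" then show "nonneg x" by (simp add: fiber_iff)
  next
    fix x y assume x: "x \<in> fiber L u" and y: "y \<in> fiber L u" and le: "x \<le> y"
    have "x - y \<in> L" using fiber_diff[OF ac_lat[OF ac] x y] .
    moreover have "x - y \<le> 0" using le by (simp add: le_fun_def)
    ultimately have "x - y = 0" using ac_le[OF ac _ lat_zero[OF ac_lat[OF ac]]] by blast
    then show "x = y" by simp
  qed
qed

lemma sumv_add: "sumv (a + b) = sumv a + sumv b"
  by (simp add: sumv_def sum.distrib)

lemma sumv_nonneg: "nonneg a \<Longrightarrow> 0 \<le> sumv a"
  by (simp add: sumv_def nonneg_def sum_nonneg)

lemma sumv_pos: "nonneg a \<Longrightarrow> a \<noteq> 0 \<Longrightarrow> 0 < sumv a"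
proof -
  assume n: "nonneg a" and a: "a \<noteq> 0"
  obtain k where k: "a k \<noteq> 0" using a by (auto simp: fun_eq_iff)
  have "0 \<le> a k" using n by (simp add: nonneg_def)
  then have "0 < a k" using k by simp
  moreover have "\<And>i. i \<in> UNIV \<Longrightarrow> 0 \<le> a i" using n by (simp add: nonneg_def)
  ultimately show ?thesis unfolding sumv_def
    using sum_pos2[of "UNIV::'a set" k a] by simp
qed

lemma mu_nonneg: "0 \<le> mu L u"
  unfolding mu_def by (rule sum_nonneg) (simp add: fiber_iff sumv_nonneg)

lemma mu_less:
  assumes ac: "antichain_lattice L" and x: "x \<in> fiber L u" and m: "nonneg m" "m \<le> x" "m \<noteq> 0"
  shows "mu L (x - m) < mu L u"
proof -
  have l: "is_lattice L" using ac by (rule ac_lat)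
  define F' where "F' = fiber L (x - m)"
  have fin': "finite F'" using fiber_finite[OF ac] by (simp add: F'_def)
  have fin: "finite (fiber L u)" using fiber_finite[OF ac] .
  have sub: "(\<lambda>p. p + m) ` F' \<subseteq> fiber L u"
  proof
    fix q assume "q \<in> (\<lambda>p. p + m) ` F'"
    then obtain p where p: "p \<in> F'" and q: "q = p + m" by blast
    have "p + m \<in> fiber L x" using fiber_shift[OF l m(1), of p "x - m"] p by (simp add: F'_def)
    then have "q \<in> fiber L x" using q by simp
    then show "q \<in> fiber L u" using fiber_same[OF l x] by simp
  qed
  have inj: "inj_on (\<lambda>p. p + m) F'" by (rule inj_onI) simp
  have xm: "x - m \<in> F'"
  proof -
    have "nonneg (x - m)" using m(2) by (simp add: nonneg_def le_fun_def)
    then show ?thesis by (simp add: F'_def fiber_iff lat_zero[OF l])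
  qed
  have card: "1 \<le> card F'" using fin' xm by (metis One_nat_def Suc_leI card_gt_0_iff empty_iff)
  have spos: "0 < sumv m" using sumv_pos m(1) m(3) .
  have "(\<Sum>q\<in>(\<lambda>p. p + m) ` F'. sumv q) = (\<Sum>p\<in>F'. sumv (p + m))"
    using sum.reindex[OF inj] by simp
  also have "\<dots> = (\<Sum>p\<in>F'. sumv p) + of_nat (card F') * sumv m"
    by (simp add: sumv_add sum.distrib)
  finally have eq: "(\<Sum>q\<in>(\<lambda>p. p + m) ` F'. sumv q) = mu L (x - m) + of_nat (card F') * sumv m"
    by (simp add: mu_def F'_def)
  have "(\<Sum>q\<in>(\<lambda>p. p + m) ` F'. sumv q) \<le> mu L u"
    unfolding mu_def
    by (rule sum_mono2[OF fin sub]) (simp add: fiber_iff sumv_nonneg)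
  moreover have "0 < of_nat (card F') * sumv m" using card spos by simp
  ultimately show ?thesis using eq by linarith
qed

lemma edge_sym: "fiber_edge L B u v w \<Longrightarrow> fiber_edge L B u w v"
  by (auto simp: fiber_edge_def)

lemma rt_sym: "(fiber_edge L B u)\<^sup>*\<^sup>* v w \<Longrightarrow> (fiber_edge L B u)\<^sup>*\<^sup>* w v"
proof (induction rule: rtranclp_induct)
  case base
  then show ?case by simp
next
  case (step y z)
  then show ?case using edge_sym converse_rtranclp_into_rtranclp by metis
qed

lemma edge_fiber_eq: "fiber L u1 = fiber L u2 \<Longrightarrow> fiber_edge L B u1 = fiber_edge L B u2"
  by (simp add: fiber_edge_def fun_eq_iff)

lemma rt_shift:
  assumes l: "is_lattice L" and m: "nonneg m"
  shows "(fiber_edge L B c)\<^sup>*\<^sup>* p q \<Longrightarrow> (fiber_edge L B (c + m))\<^sup>*\<^sup>* (p + m) (q + m)"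
proof (induction rule: rtranclp_induct)
  case base
  then show ?case by simp
next
  case (step y z)
  have "fiber_edge L B (c + m) (y + m) (z + m)"
    using step(2) fiber_shift[OF l m] by (auto simp: fiber_edge_def)
  then show ?case using rtranclp.rtrancl_into_rtrancl[OF step(3)] by blast
qed

lemma minv_props:
  assumes "nonneg x" "nonneg y"
  shows "nonneg (minv x y)" "minv x y \<le> x" "minv x y \<le> y"
  using assms by (auto simp: minv_def nonneg_def le_fun_def)



definition fullpos :: "('n::finite \<Rightarrow> int) \<Rightarrow> bool" where
  "fullpos z \<longleftrightarrow> (\<forall>k. 0 < z k)"

lemma fullpos_shift: "fullpos z \<Longrightarrow> nonneg m \<Longrightarrow> fullpos (z + m)"
  by (auto simp: fullpos_def nonneg_def add_pos_nonneg)

lemma nn_pos: "nonneg x \<Longrightarrow> x k \<noteq> 0 \<Longrightarrow> 0 < x k"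
proof -
  assume "nonneg x" "x k \<noteq> 0"
  moreover have "0 \<le> x k" using \<open>nonneg x\<close> by (simp add: nonneg_def)
  ultimately show ?thesis by simp
qed

lemma minv_zero: "x j = 0 \<Longrightarrow> nonneg y \<Longrightarrow> minv x y j = 0"
  by (simp add: minv_def nonneg_def)

lemma minv_zero2: "y j = 0 \<Longrightarrow> nonneg x \<Longrightarrow> minv x y j = 0"
  by (simp add: minv_def nonneg_def)

lemma reduce_fiber:
  assumes ac: "antichain_lattice L" and p: "p \<in> fiber L u" and q: "q \<in> fiber L u"
    and m_def: "m = minv p q" and nz: "m \<noteq> 0"
  shows "nonneg (p - m)" "nat (mu L (p - m)) < nat (mu L u)"
    "p - m \<in> fiber L (p - m)" "q - m \<in> fiber L (p - m)"
    "\<And>z. z \<in> fiber L (p - m) \<Longrightarrow> z + m \<in> fiber L u"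
    "nonneg m"
proof -
  have l: "is_lattice L" using ac by (rule ac_lat)
  have np: "nonneg p" and nq: "nonneg q" using p q by (simp_all add: fiber_iff)
  have mp: "nonneg m" "m \<le> p" "m \<le> q" using minv_props[OF np nq] m_def by simp_all
  show "nonneg m" by (rule mp(1))
  show npm: "nonneg (p - m)" using mp(2) by (simp add: nonneg_def le_fun_def)
  have "mu L (p - m) < mu L u" by (rule mu_less[OF ac p mp(1) mp(2) nz])
  then show "nat (mu L (p - m)) < nat (mu L u)" using mu_nonneg[of L "p - m"] by simp
  show "p - m \<in> fiber L (p - m)" by (rule self_fiber[OF l npm])
  have "nonneg (q - m)" using mp(3) by (simp add: nonneg_def le_fun_def)
  moreover have "(q - m) - (p - m) \<in> L"
  proof -
    have "q - p \<in> L" by (rule fiber_diff[OF l q p])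
    moreover have "(q - m) - (p - m) = q - p" by (simp add: algebra_simps)
    ultimately show ?thesis by simp
  qed
  ultimately show "q - m \<in> fiber L (p - m)" by (simp add: fiber_iff)
  fix z assume z: "z \<in> fiber L (p - m)"
  have "z + m \<in> fiber L (p - m + m)" by (rule fiber_shift[OF l mp(1) z])
  then have "z + m \<in> fiber L p" by simp
  then show "z + m \<in> fiber L u" using fiber_same[OF l p] by simp
qed

lemma nonzero_pos: "nonneg x \<Longrightarrow> x \<noteq> 0 \<Longrightarrow> \<exists>k. 0 < x k"
  by (auto simp: nonneg_def fun_eq_iff order_le_less)

lemma zero_in_fiber: "antichain_lattice L \<Longrightarrow> 0 \<in> fiber L u \<Longrightarrow> z \<in> fiber L u \<Longrightarrow> z = 0"
proof -
  assume ac: "antichain_lattice L" and o: "0 \<in> fiber L u" and z: "z \<in> fiber L u"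
  have l: "is_lattice L" using ac by (rule ac_lat)
  have "z - 0 \<in> L" by (rule fiber_diff[OF l z o])
  then have zl: "z \<in> L" by simp
  have "0 \<le> z" using z by (simp add: fiber_iff nonneg_def le_fun_def)
  then show "z = 0" using ac_le[OF ac lat_zero[OF l] zl] by simp
qed

lemma claimA:
  assumes ac: "antichain_lattice L" and mk: "markov_basis L B" and fs: "\<forall>b\<in>B. fully_supported b"
  shows "nonneg u \<Longrightarrow> \<not> (\<exists>z\<in>fiber L u. fullpos z) \<Longrightarrow> x \<in> fiber L u \<Longrightarrow> y \<in> fiber L u
    \<Longrightarrow> x \<noteq> y \<Longrightarrow> x i = 0 \<Longrightarrow> y i = 0 \<Longrightarrow> False"
proof (induction "nat (mu L u)" arbitrary: u x y i rule: less_induct)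
  case less
  have l: "is_lattice L" using ac by (rule ac_lat)
  have R: False if p: "p \<in> fiber L u" and q: "q \<in> fiber L u" and pq: "p \<noteq> q"
    and nz: "minv p q \<noteq> 0" and pj: "p j = 0" and qj: "q j = 0" for p q j
  proof -
    define m where "m = minv p q"
    note r = reduce_fiber[OF ac p q m_def nz[folded m_def]]
    have nfp: "\<not> (\<exists>z\<in>fiber L (p - m). fullpos z)"
    proof
      assume "\<exists>z\<in>fiber L (p - m). fullpos z"
      then obtain z where z: "z \<in> fiber L (p - m)" "fullpos z" by blast
      have "z + m \<in> fiber L u" using r(5)[OF z(1)] .
      moreover have "fullpos (z + m)" by (rule fullpos_shift[OF z(2) r(6)])
      ultimately show False using less.prems(2) by blast
    qed
    have ne: "p - m \<noteq> q - m" using pq by simp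
    have mj: "m j = 0" using minv_zero[of p j q, OF pj] q by (simp add: m_def fiber_iff)
    have "(p - m) j = 0" "(q - m) j = 0" using pj qj mj by simp_all
    then show False using less.hyps[OF r(2) r(1) nfp r(3) r(4) ne] by blast
  qed
  have nx: "nonneg x" and ny: "nonneg y" using less.prems by (simp_all add: fiber_iff)
  have mxy: "minv x y = 0" using R[OF less.prems(3) less.prems(4) less.prems(5) _ less.prems(6) less.prems(7)] by blast
  have y0: "y \<noteq> 0"
  proof
    assume "y = 0"
    then have "x = 0" using zero_in_fiber[OF ac _ less.prems(3)] less.prems(4) by simp
    then show False using \<open>y = 0\<close> less.prems(5) by simp
  qed
  obtain yb where yb: "0 < y yb" using nonzero_pos[OF ny y0] by blast
  have xyb: "x yb = 0"
  proof -
    have "min (x yb) (y yb) = 0" using mxy by (simp add: minv_def fun_eq_iff)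
    then show ?thesis using yb nx by (simp add: nonneg_def min_def split: if_splits)
  qed
  have conn: "(fiber_edge L B u)\<^sup>*\<^sup>* x y"
    using mk less.prems(1,3,4) by (simp add: markov_basis_def fiber_graph_connected_def)
  then show False
  proof (cases rule: converse_rtranclpE)
    case base
    then show False using less.prems(5) by simp
  next
    case (step p1)
    have p1: "p1 \<in> fiber L u" using step(1) by (simp add: fiber_edge_def)
    have np1: "nonneg p1" using p1 by (simp add: fiber_iff)
    have diff: "x k \<noteq> p1 k" for k
    proof -
      have "x - p1 \<in> B \<or> p1 - x \<in> B" using step(1) by (simp add: fiber_edge_def)
      then obtain g where g: "g \<in> B" "g = x - p1 \<or> g = p1 - x" by blast
      have "g k \<noteq> 0" using fs g(1) by (simp add: fully_supported_def)
      then show ?thesis using g(2) by auto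
    qed
    show False
    proof (cases "p1 = y")
      case True
      then show False using diff[of i] less.prems(6,7) by simp
    next
      case False
      have "p1 yb \<noteq> 0" using diff[of yb] xyb by simp
      then have "0 < p1 yb" using nn_pos[OF np1] by blast
      then have "minv p1 y yb \<noteq> 0" using yb by (simp add: minv_def)
      then have nz: "minv p1 y \<noteq> 0" by auto
      have "\<not> fullpos p1" using less.prems(2) p1 by blast
      then obtain j where "\<not> 0 < p1 j" by (auto simp: fullpos_def)
      moreover have "0 \<le> p1 j" using np1 by (simp add: nonneg_def)
      ultimately have pj: "p1 j = 0" by simp
      have "x j \<noteq> 0" using diff[of j] pj by simp
      then have "0 < x j" using nn_pos[OF nx] by blast
      then have "y j = 0"
      proof -
        have "min (x j) (y j) = 0" using mxy by (simp add: minv_def fun_eq_iff)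
        then show ?thesis using \<open>0 < x j\<close> ny by (simp add: nonneg_def min_def split: if_splits)
      qed
      then show False using R[OF p1 less.prems(4) False nz pj] by blast
    qed
  qed
qed



definition Hset :: "('n::finite \<Rightarrow> int) set \<Rightarrow> ('n \<Rightarrow> int) \<Rightarrow> ('n \<Rightarrow> int) set" where
  "Hset L u = {g. fully_supported g \<and> (\<exists>p\<in>fiber L u. \<exists>q\<in>fiber L u. g = p - q)}"

lemma gf_fiber:
  assumes gf: "generic_faces L" and l: "is_lattice L" and nu: "nonneg u"
    and nfp: "\<not> (\<exists>z\<in>fiber L u. fullpos z)"
    and x: "x \<in> fiber L u" and y: "y \<in> fiber L u" and xi: "x i = 0" and yi: "y i = 0"
  shows "x = y"
proof -
  have o: "T_open u \<inter> L = {}"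
  proof (rule ccontr)
    assume "T_open u \<inter> L \<noteq> {}"
    then obtain c where c: "c \<in> L" "\<forall>k. c k < u k" by (auto simp: T_open_def)
    have "(u - c) - u \<in> L" using lat_neg[OF l c(1)] by simp
    moreover have "nonneg (u - c)" using c(2) by (simp add: nonneg_def less_imp_le)
    moreover have "fullpos (u - c)" using c(2) by (simp add: fullpos_def)
    ultimately show False using nfp by (auto simp: fiber_iff)
  qed
  have a: "u - x \<in> T_face u {i} \<inter> L"
  proof -
    have "x - u \<in> L" using x by (simp add: fiber_iff)
    then have "-(x - u) \<in> L" by (rule lat_neg[OF l])
    moreover have "-(x - u) = u - x" by simp
    ultimately have "u - x \<in> L" by simp
    moreover have "u - x \<le> u" using x by (simp add: fiber_iff nonneg_def le_fun_def)
    ultimately show ?thesis using xi by (simp add: T_face_def T_cone_def)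
  qed
  have b: "u - y \<in> T_face u {i} \<inter> L"
  proof -
    have "y - u \<in> L" using y by (simp add: fiber_iff)
    then have "-(y - u) \<in> L" by (rule lat_neg[OF l])
    moreover have "-(y - u) = u - y" by simp
    ultimately have "u - y \<in> L" by simp
    moreover have "u - y \<le> u" using y by (simp add: fiber_iff nonneg_def le_fun_def)
    ultimately show ?thesis using yi by (simp add: T_face_def T_cone_def)
  qed
  have "u - x = u - y" using gf o a b unfolding generic_faces_def by blast
  then show ?thesis by simp
qed

lemma claimC:
  assumes ac: "antichain_lattice L" and gf: "generic_faces L"
  shows "nonneg u \<Longrightarrow> Hset L u \<subseteq> B \<Longrightarrow> x \<in> fiber L u \<Longrightarrow> y \<in> fiber L u
    \<Longrightarrow> (fiber_edge L B u)\<^sup>*\<^sup>* x y"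
proof (induction "nat (mu L u)" arbitrary: u x y rule: less_induct)
  case less
  have l: "is_lattice L" using ac by (rule ac_lat)
  have R: "(fiber_edge L B u)\<^sup>*\<^sup>* p q" if p: "p \<in> fiber L u" and q: "q \<in> fiber L u"
    and nz: "minv p q \<noteq> 0" for p q
  proof -
    define m where "m = minv p q"
    note r = reduce_fiber[OF ac p q m_def nz[folded m_def]]
    have H: "Hset L (p - m) \<subseteq> B"
    proof
      fix g assume "g \<in> Hset L (p - m)"
      then obtain p' q' where g: "fully_supported g" "p' \<in> fiber L (p - m)" "q' \<in> fiber L (p - m)" "g = p' - q'"
        by (auto simp: Hset_def)
      have "g = (p' + m) - (q' + m)" using g(4) by simp
      then have "g \<in> Hset L u" using g(1) r(5)[OF g(2)] r(5)[OF g(3)] unfolding Hset_def by blast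
      then show "g \<in> B" using less.prems(2) by blast
    qed
    have "(fiber_edge L B (p - m))\<^sup>*\<^sup>* (p - m) (q - m)"
      by (rule less.hyps[OF r(2) r(1) H r(3) r(4)])
    from rt_shift[OF l r(6) this]
    have "(fiber_edge L B (p - m + m))\<^sup>*\<^sup>* (p - m + m) (q - m + m)" .
    then have "(fiber_edge L B p)\<^sup>*\<^sup>* p q" by simp
    moreover have "fiber_edge L B p = fiber_edge L B u"
      by (rule edge_fiber_eq[OF fiber_same[OF l p]])
    ultimately show ?thesis by simp
  qed
  have nx: "nonneg x" and ny: "nonneg y" using less.prems by (simp_all add: fiber_iff)
  show ?case
  proof (cases "\<exists>z\<in>fiber L u. fullpos z")
    case True
    then obtain z where z: "z \<in> fiber L u" "fullpos z" by blast
    have z0: "z \<noteq> 0" using z(2) by (auto simp: fullpos_def)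
    have conn: "(fiber_edge L B u)\<^sup>*\<^sup>* w z" if w: "w \<in> fiber L u" for w
    proof -
      have nw: "nonneg w" using w by (simp add: fiber_iff)
      have "w \<noteq> 0"
      proof
        assume "w = 0"
        then have "z = 0" using zero_in_fiber[OF ac _ z(1)] w by simp
        then show False using z0 by simp
      qed
      then obtain k where "0 < w k" using nonzero_pos[OF nw] by blast
      moreover have "0 < z k" using z(2) by (simp add: fullpos_def)
      ultimately have "minv w z k \<noteq> 0" by (simp add: minv_def)
      then have "minv w z \<noteq> 0" by auto
      then show ?thesis by (rule R[OF w z(1)])
    qed
    have "(fiber_edge L B u)\<^sup>*\<^sup>* z y" using rt_sym[OF conn[OF less.prems(4)]] .
    then show ?thesis using conn[OF less.prems(3)] by (rule rtranclp_trans[rotated])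
  next
    case False
    show ?thesis
    proof (cases "x = y")
      case True
      then show ?thesis by simp
    next
      case xy: False
      show ?thesis
      proof (cases "minv x y = 0")
        case False
        then show ?thesis by (rule R[OF less.prems(3,4)])
      next
        case True
        have fsd: "fully_supported (x - y)"
          unfolding fully_supported_def
        proof
          fix k
          have mk: "min (x k) (y k) = 0" using True by (simp add: minv_def fun_eq_iff)
          have "\<not> (x k = 0 \<and> y k = 0)"
          proof
            assume "x k = 0 \<and> y k = 0"
            then have "x = y" using gf_fiber[OF gf l less.prems(1) False less.prems(3,4)] by blast
            then show False using xy by simp
          qed
          moreover have "0 \<le> x k" "0 \<le> y k" using nx ny by (simp_all add: nonneg_def)
          ultimately show "(x - y) k \<noteq> 0" using mk by (auto simp: min_def split: if_splits)
        qed
        then have "x - y \<in> B" using less.prems(2,3,4) by (auto simp: Hset_def)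
        then have "fiber_edge L B u x y" using less.prems(3,4) by (simp add: fiber_edge_def)
        then show ?thesis by simp
      qed
    qed
  qed
qed



definition Dset :: "('n::finite \<Rightarrow> int) set \<Rightarrow> (('n \<Rightarrow> int) \<times> ('n \<Rightarrow> int)) set" where
  "Dset L = {(v,w). nonneg v \<and> nonneg w \<and> v - w \<in> L \<and> v \<noteq> w}"

definition Mset :: "('n::finite \<Rightarrow> int) set \<Rightarrow> (('n \<Rightarrow> int) \<times> ('n \<Rightarrow> int)) set" where
  "Mset L = {(v,w) \<in> Dset L. \<forall>v' w'. (v',w') \<in> Dset L \<longrightarrow> v' \<le> v \<longrightarrow> w' \<le> w \<longrightarrow> v' = v \<and> w' = w}"

lemma Mset_finite: "finite (Mset L)"
proof (rule antichain_pairs_finite)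
  fix x y assume "(x,y) \<in> Mset L" then show "nonneg x \<and> nonneg y" by (simp add: Mset_def Dset_def)
next
  fix x y x' y' assume a: "(x,y) \<in> Mset L" and b: "(x',y') \<in> Mset L" and le: "x \<le> x'" "y \<le> y'"
  have "(x,y) \<in> Dset L" using a by (simp add: Mset_def)
  then show "x = x' \<and> y = y'" using b le unfolding Mset_def by auto
qed

lemma sumv_le_eq:
  assumes "v' \<le> v" "sumv v \<le> sumv v'"
  shows "v' = v"
proof -
  have "(\<Sum>k\<in>UNIV. v k - v' k) = sumv v - sumv v'" by (simp add: sumv_def sum_subtractf)
  then have s0: "(\<Sum>k\<in>UNIV. v k - v' k) \<le> 0" using assms(2) by simp
  have nn: "\<And>k. k \<in> UNIV \<Longrightarrow> 0 \<le> v k - v' k" using assms(1) by (simp add: le_fun_def)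
  have "0 \<le> (\<Sum>k\<in>UNIV. v k - v' k)" by (rule sum_nonneg[OF nn])
  then have "(\<Sum>k\<in>UNIV. v k - v' k) = 0" using s0 by simp
  then have "\<forall>k\<in>UNIV. v k - v' k = 0" using sum_nonneg_eq_0_iff[of "UNIV::'a set" "\<lambda>k. v k - v' k"] nn by simp
  then show ?thesis by (simp add: fun_eq_iff)
qed

lemma sumv_mono: "v' \<le> v \<Longrightarrow> sumv v' \<le> sumv v"
  unfolding sumv_def by (rule sum_mono) (simp add: le_fun_def)

lemma lemmaE:
  assumes l: "is_lattice L" and hyp: "\<forall>(v,w)\<in>Mset L. (fiber_edge L B v)\<^sup>*\<^sup>* v w"
  shows "nonneg x \<Longrightarrow> nonneg y \<Longrightarrow> x - y \<in> L \<Longrightarrow> (fiber_edge L B x)\<^sup>*\<^sup>* x y"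
proof (induction "nat (sumv x + sumv y)" arbitrary: x y rule: less_induct)
  case less
  show ?case
  proof (cases "x = y")
    case True then show ?thesis by simp
  next
    case False
    define P where "P = (\<lambda>p. p \<in> Dset L \<and> fst p \<le> x \<and> snd p \<le> y)"
    have Pxy: "P (x,y)" using less.prems False by (simp add: P_def Dset_def)
    obtain pm where pm: "P pm" and pmin: "\<forall>p. P p \<longrightarrow> nat (sumv (fst pm) + sumv (snd pm)) \<le> nat (sumv (fst p) + sumv (snd p))"
      using ex_has_least_nat[of P "(x,y)" "\<lambda>p. nat (sumv (fst p) + sumv (snd p))", OF Pxy] by blast
    obtain v w where vw: "pm = (v,w)" by (cases pm)
    have vwD: "(v,w) \<in> Dset L" and vx: "v \<le> x" and wy: "w \<le> y" using pm vw by (simp_all add: P_def)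
    have nv: "nonneg v" and nw: "nonneg w" and vwL: "v - w \<in> L" and vnw: "v \<noteq> w" using vwD by (simp_all add: Dset_def)
    have vwM: "(v,w) \<in> Mset L"
      unfolding Mset_def
    proof (intro CollectI, simp only: case_prod_conv, intro conjI allI impI)
      show "(v,w) \<in> Dset L" by (rule vwD)
      fix v' w' assume d: "(v',w') \<in> Dset L" and le: "v' \<le> v" "w' \<le> w"
      have "P (v',w')" using d le vx wy by (auto simp: P_def intro: order_trans)
      then have "nat (sumv v + sumv w) \<le> nat (sumv v' + sumv w')" using pmin vw by fastforce
      moreover have "0 \<le> sumv v'" "0 \<le> sumv w'" using d by (simp_all add: Dset_def sumv_nonneg)
      ultimately have s: "sumv v + sumv w \<le> sumv v' + sumv w'" by simp
      have s1: "sumv v' \<le> sumv v" "sumv w' \<le> sumv w" using le sumv_mono by auto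
      show "v' = v" using sumv_le_eq[OF le(1)] s s1 by simp
      show "w' = w" using sumv_le_eq[OF le(2)] s s1 by simp
    qed
    define c where "c = x - v"
    define d where "d = y - w"
    have nc: "nonneg c" using vx by (simp add: c_def nonneg_def le_fun_def)
    have nd: "nonneg d" using wy by (simp add: d_def nonneg_def le_fun_def)
    have p1: "(fiber_edge L B v)\<^sup>*\<^sup>* v w" using hyp vwM by blast
    from rt_shift[OF l nc p1] have p2: "(fiber_edge L B x)\<^sup>*\<^sup>* x (w + c)"
      by (simp add: c_def)
    show ?thesis
    proof (cases "c = d")
      case True
      then have "w + c = y" by (simp add: d_def)
      then show ?thesis using p2 by simp
    next
      case cd: False
      have cdL: "c - d \<in> L"
      proof -
        have "(x - y) - (v - w) \<in> L" by (rule lat_diff[OF l less.prems(3) vwL])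
        moreover have "(x - y) - (v - w) = c - d" by (simp add: c_def d_def algebra_simps)
        ultimately show ?thesis by simp
      qed
      have sp: "0 < sumv v + sumv w"
      proof (cases "v = 0")
        case True
        then have "w \<noteq> 0" using vnw by simp
        then show ?thesis using sumv_pos[OF nw] sumv_nonneg[OF nv] by simp
      next
        case False
        then show ?thesis using sumv_pos[OF nv] sumv_nonneg[OF nw] by simp
      qed
      have "sumv x = sumv c + sumv v" "sumv y = sumv d + sumv w"
        by (simp_all add: c_def d_def flip: sumv_add)
      then have lt: "nat (sumv c + sumv d) < nat (sumv x + sumv y)"
        using sp sumv_nonneg[OF nc] sumv_nonneg[OF nd] by simp
      have p3: "(fiber_edge L B c)\<^sup>*\<^sup>* c d" by (rule less.hyps[OF lt nc nd cdL])
      from rt_shift[OF l nw p3] have p4: "(fiber_edge L B (c + w))\<^sup>*\<^sup>* (c + w) (d + w)" .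
      have cwx: "c + w \<in> fiber L x"
      proof -
        have e: "(c + w) - x = -(v - w)" by (simp add: c_def algebra_simps)
        have "(c + w) - x \<in> L" unfolding e by (rule lat_neg[OF l vwL])
        then show ?thesis using nonneg_add[OF nc nw] by (simp add: fiber_iff)
      qed
      have nx: "nonneg x" by (rule less.prems(1))
      have "fiber L (c + w) = fiber L x" by (rule fiber_same[OF l cwx])
      then have "fiber_edge L B (c + w) = fiber_edge L B x" by (rule edge_fiber_eq)
      then have p5: "(fiber_edge L B x)\<^sup>*\<^sup>* (w + c) y" using p4 by (simp add: d_def add.commute)
      show ?thesis using rtranclp_trans[OF p2 p5] .
    qed
  qed
qed

lemma markov_from_M:
  assumes l: "is_lattice L" and fin: "finite B" and sub: "B \<subseteq> L"
    and hyp: "\<forall>(v,w)\<in>Mset L. (fiber_edge L B v)\<^sup>*\<^sup>* v w"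
  shows "markov_basis L B"
  unfolding markov_basis_def fiber_graph_connected_def
proof (intro conjI fin sub allI impI ballI)
  fix u v w assume nu: "nonneg u" and v: "v \<in> fiber L u" and w: "w \<in> fiber L u"
  have "(fiber_edge L B v)\<^sup>*\<^sup>* v w"
    using lemmaE[OF l hyp] v w fiber_diff[OF l v w] by (simp add: fiber_iff)
  moreover have "fiber_edge L B v = fiber_edge L B u" by (rule edge_fiber_eq[OF fiber_same[OF l v]])
  ultimately show "(fiber_edge L B u)\<^sup>*\<^sup>* v w" by simp
qed

lemma minimal_sub:
  assumes "markov_basis L B"
  shows "\<exists>C\<subseteq>B. minimal_markov_basis L C"
proof -
  define P where "P = (\<lambda>C. C \<subseteq> B \<and> markov_basis L C)"
  have "P B" using assms by (simp add: P_def)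
  then obtain C where C: "P C" and Cmin: "\<forall>C'. P C' \<longrightarrow> card C \<le> card C'"
    using ex_has_least_nat[of P B card] by blast
  have "minimal_markov_basis L C"
    unfolding minimal_markov_basis_def
  proof (intro conjI allI impI)
    show "markov_basis L C" using C by (simp add: P_def)
    fix C' assume ps: "C' \<subset> C"
    show "\<not> markov_basis L C'"
    proof
      assume mc: "markov_basis L C'"
      have "finite C" using C by (simp add: P_def markov_basis_def)
      then have "card C' < card C" using ps by (rule psubset_card_mono)
      moreover have "P C'" using mc ps C by (auto simp: P_def)
      ultimately show False using Cmin by fastforce
    qed
  qed
  then show ?thesis using C by (auto simp: P_def)
qed

theorem mainTheorem10:
  fixes L :: "('n::finite \<Rightarrow> int) set"
  assumes "antichain_lattice L"
  shows "generic_markov L \<longleftrightarrow> generic_faces L"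
proof
  have ac: "antichain_lattice L" by (rule assms)
  have l: "is_lattice L" using ac by (rule ac_lat)
  assume "generic_markov L"
  then obtain B where B: "minimal_markov_basis L B" "\<forall>b\<in>B. fully_supported b"
    by (auto simp: generic_markov_def)
  have mk: "markov_basis L B" using B(1) by (simp add: minimal_markov_basis_def)
  show "generic_faces L"
    unfolding generic_faces_def
  proof (intro allI impI ballI)
    fix eta :: "'n \<Rightarrow> int" and X :: "'n set" and a b
    assume o: "T_open eta \<inter> L = {}" and X: "X \<noteq> {}" and a: "a \<in> T_face eta X \<inter> L" and b: "b \<in> T_face eta X \<inter> L"
    obtain i where i: "i \<in> X" using X by blast
    define u where "u = eta - a"
    have aL: "a \<in> L" and bL: "b \<in> L" using a b by simp_all
    have nu: "nonneg u" using a by (simp add: u_def T_face_def T_cone_def nonneg_def le_fun_def)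
    have nb: "nonneg (eta - b)" using b by (simp add: T_face_def T_cone_def nonneg_def le_fun_def)
    have xf: "u \<in> fiber L u" by (rule self_fiber[OF l nu])
    have yf: "eta - b \<in> fiber L u"
    proof -
      have e: "(eta - b) - u = a - b" by (simp add: u_def)
      have "(eta - b) - u \<in> L" unfolding e by (rule lat_diff[OF l aL bL])
      then show ?thesis using nb by (simp add: fiber_iff)
    qed
    have nfp: "\<not> (\<exists>z\<in>fiber L u. fullpos z)"
    proof
      assume "\<exists>z\<in>fiber L u. fullpos z"
      then obtain z where z: "z \<in> fiber L u" "fullpos z" by blast
      have zl: "z - u \<in> L" using z(1) by (simp add: fiber_iff)
      have e: "eta - z = a - (z - u)" by (simp add: u_def)
      have "eta - z \<in> L" unfolding e by (rule lat_diff[OF l aL zl])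
      moreover have "eta - z \<in> T_open eta" using z(2) by (simp add: T_open_def fullpos_def)
      ultimately show False using o by blast
    qed
    have xi: "u i = 0" using a i by (simp add: u_def T_face_def)
    have yi: "(eta - b) i = 0" using b i by (simp add: T_face_def)
    show "a = b"
    proof (rule ccontr)
      assume "a \<noteq> b"
      then have "u \<noteq> eta - b" by (simp add: u_def)
      then show False using claimA[OF ac mk B(2) nu nfp xf yf _ xi yi] by blast
    qed
  qed
next
  have ac: "antichain_lattice L" by (rule assms)
  have l: "is_lattice L" using ac by (rule ac_lat)
  assume gf: "generic_faces L"
  define B where "B = (\<Union>vw\<in>Mset L. Hset L (fst vw))"
  have finB: "finite B"
    unfolding B_def
  proof (rule finite_UN_I[OF Mset_finite])
    fix vw :: "('n \<Rightarrow> int) \<times> ('n \<Rightarrow> int)"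
    have "Hset L (fst vw) \<subseteq> (\<lambda>pq. fst pq - snd pq) ` (fiber L (fst vw) \<times> fiber L (fst vw))"
    proof
      fix g assume "g \<in> Hset L (fst vw)"
      then obtain p q where pq: "p \<in> fiber L (fst vw)" "q \<in> fiber L (fst vw)" "g = p - q"
        by (auto simp: Hset_def)
      show "g \<in> (\<lambda>pq. fst pq - snd pq) ` (fiber L (fst vw) \<times> fiber L (fst vw))"
        by (rule image_eqI[of _ _ "(p,q)"]) (use pq in auto)
    qed
    moreover have "finite ((\<lambda>pq. fst pq - snd pq) ` (fiber L (fst vw) \<times> fiber L (fst vw)))"
      using fiber_finite[OF ac] by simp
    ultimately show "finite (Hset L (fst vw))" by (rule finite_subset)
  qed
  have subL: "B \<subseteq> L"
  proof
    fix g assume "g \<in> B"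
    then obtain u p q where "p \<in> fiber L u" "q \<in> fiber L u" "g = p - q"
      by (auto simp: B_def Hset_def)
    then show "g \<in> L" using fiber_diff[OF l] by simp
  qed
  have fsB: "\<forall>b\<in>B. fully_supported b" by (auto simp: B_def Hset_def)
  have hyp: "\<forall>(v,w)\<in>Mset L. (fiber_edge L B v)\<^sup>*\<^sup>* v w"
  proof (intro ballI, clarify)
    fix v w assume vw: "(v,w) \<in> Mset L"
    have nv: "nonneg v" and nw: "nonneg w" and vwL: "v - w \<in> L" using vw by (simp_all add: Mset_def Dset_def)
    have H: "Hset L v \<subseteq> B" using vw by (force simp: B_def)
    have vf: "v \<in> fiber L v" by (rule self_fiber[OF l nv])
    have wf: "w \<in> fiber L v"
    proof -
      have "w - v = -(v - w)" by simp
      then show ?thesis using lat_neg[OF l vwL] nw by (simp add: fiber_iff)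
    qed
    show "(fiber_edge L B v)\<^sup>*\<^sup>* v w" by (rule claimC[OF ac gf nv H vf wf])
  qed
  have mk: "markov_basis L B" by (rule markov_from_M[OF l finB subL hyp])
  obtain C where C: "C \<subseteq> B" "minimal_markov_basis L C" using minimal_sub[OF mk] by blast
  show "generic_markov L"
    unfolding generic_markov_def using C fsB by blast
qed


end
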